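(* Let $Q$ be a finite multiset of tuples (all with the same QI values) and $l\ge1$ an integer. Let $\dot{Q}$ be obtained from $Q$ by repeatedly removing one tuple whose SA value is a pillar of the current multiset, until the current multiset is $l$-eligible (ties among pillars broken arbitrarily). Then for every $l$-eligible sub-multiset $Q' \subseteq Q$ and every SA value $v$, $h(Q',v) \le h(\dot{Q},v)$.
   Context: Tuples carry a sensitive attribute (SA) value. For a multiset $Q$ of tuples and an SA value $v$, $h(Q,v)$ is the number of tuples of $Q$ with SA value $v$; the pillar height is $h(Q)=\max_v h(Q,v)$, and a pillar of $Q$ is an SA value $v$ with $h(Q,v)=h(Q)$. $Q$ is $l$-eligible if $|Q| \ge l\cdot h(Q)$ (i.e., at most $|Q|/l$ tuples share any SA value; the empty multiset is $l$-eligible). *)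

theory Defs
  imports Main "HOL-Library.Multiset"
begin

text \<open>Tuples have abstract type 'a; sa gives the sensitive attribute value.
  All tuples share the same QI values, so QI is not modelled.\<close>

definition hcount :: "('a \<Rightarrow> 'b) \<Rightarrow> 'a multiset \<Rightarrow> 'b \<Rightarrow> nat" where
  "hcount sa Q v = size (filter_mset (\<lambda>t. sa t = v) Q)"

definition pillar_height :: "('a \<Rightarrow> 'b) \<Rightarrow> 'a multiset \<Rightarrow> nat" where
  "pillar_height sa Q = Max (insert 0 ((\<lambda>v. hcount sa Q v) ` (sa ` set_mset Q)))"

definition is_pillar :: "('a \<Rightarrow> 'b) \<Rightarrow> 'a multiset \<Rightarrow> 'b \<Rightarrow> bool" where
  "is_pillar sa Q v \<longleftrightarrow> hcount sa Q v = pillar_height sa Q"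

definition l_eligible :: "nat \<Rightarrow> ('a \<Rightarrow> 'b) \<Rightarrow> 'a multiset \<Rightarrow> bool" where
  "l_eligible l sa Q \<longleftrightarrow> size Q \<ge> l * pillar_height sa Q"

inductive peel :: "nat \<Rightarrow> ('a \<Rightarrow> 'b) \<Rightarrow> 'a multiset \<Rightarrow> 'a multiset \<Rightarrow> bool"
  for l sa where
  stop: "l_eligible l sa Q \<Longrightarrow> peel l sa Q Q"
| step: "\<not> l_eligible l sa Q \<Longrightarrow> x \<in># Q \<Longrightarrow> is_pillar sa Q (sa x)
          \<Longrightarrow> peel l sa (Q - {#x#}) R \<Longrightarrow> peel l sa Q R"

end

theory Submission
  imports Defs
begin

lemma hcount_img: "hcount sa Q v = count (image_mset sa Q) v"
  unfolding hcount_def by (induction Q) auto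

lemma hcount_le_ph: "hcount sa Q w \<le> pillar_height sa Q"
proof (cases "w \<in> sa ` set_mset Q")
  case True
  then show ?thesis unfolding pillar_height_def by (intro Max_ge) auto
next
  case False
  then have "hcount sa Q w = 0" unfolding hcount_img by (simp add: count_eq_zero_iff)
  then show ?thesis by simp
qed

lemma ph_attained: "\<exists>w. pillar_height sa Q = hcount sa Q w"
proof -
  let ?S = "insert 0 ((\<lambda>v. hcount sa Q v) ` (sa ` set_mset Q))"
  have "finite ?S" by simp
  then have "Max ?S \<in> ?S" by (intro Max_in) auto
  show ?thesis
  proof (cases "Max ?S = 0")
    case False
    then show ?thesis using \<open>Max ?S \<in> ?S\<close> unfolding pillar_height_def by auto
  next
    case z: True
    show ?thesis
    proof (cases "Q = {#}")
      case True
      then show ?thesis unfolding pillar_height_def hcount_def by simp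
    next
      case False
      then obtain y where y: "y \<in># Q" by (meson multiset_nonemptyE)
      have "hcount sa Q (sa y) \<le> pillar_height sa Q" by (rule hcount_le_ph)
      then show ?thesis using z unfolding pillar_height_def by auto
    qed
  qed
qed

lemma ph_le: assumes "\<And>w. hcount sa Q' w \<le> hcount sa Q w"
  shows "pillar_height sa Q' \<le> pillar_height sa Q"
  using ph_attained[of sa Q'] assms hcount_le_ph by (metis le_trans)

lemma size_le: assumes "\<And>w. hcount sa Q' w \<le> hcount sa Q w"
  shows "size Q' \<le> size Q"
proof -
  have "image_mset sa Q' \<subseteq># image_mset sa Q"
    using assms by (simp add: subseteq_mset_def hcount_img)
  then show ?thesis by (metis size_image_mset size_mset_mono)
qed

lemma main:
  assumes "peel l sa Q R"
  shows "\<And>Q'. l_eligible l sa Q' \<Longrightarrow> (\<forall>w. hcount sa Q' w \<le> hcount sa Q w) \<Longrightarrow>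
    hcount sa Q' v \<le> hcount sa R v"
  using assms
proof (induction rule: peel.induct)
  case (stop Q)
  then show ?case by auto
next
  case (step Q x R)
  have "\<forall>w. hcount sa Q' w \<le> hcount sa (Q - {#x#}) w"
  proof
    fix w
    show "hcount sa Q' w \<le> hcount sa (Q - {#x#}) w"
    proof (cases "w = sa x")
      case False
      then show ?thesis using step.prems(2) step.hyps(2)
        by (simp add: hcount_img image_mset_Diff)
    next
      case True
      have H: "hcount sa Q (sa x) = pillar_height sa Q" using step.hyps(3) is_pillar_def by metis
      have cx: "hcount sa (Q - {#x#}) (sa x) = hcount sa Q (sa x) - 1"
        using step.hyps(2) by (simp add: hcount_img image_mset_Diff)
      have pos: "hcount sa Q (sa x) \<ge> 1" using step.hyps(2)
        by (simp add: hcount_img Suc_le_eq)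
      show ?thesis
      proof (rule ccontr)
        assume "\<not> ?thesis"
        then have nn: "\<not> hcount sa Q' (sa x) \<le> hcount sa (Q - {#x#}) (sa x)" using True by simp
        then have eq: "hcount sa Q' (sa x) = pillar_height sa Q"
          using True cx H pos spec[OF step.prems(2), of "sa x"] by linarith
        have "pillar_height sa Q' \<le> pillar_height sa Q" using ph_le step.prems(2) by blast
        moreover have "hcount sa Q' (sa x) \<le> pillar_height sa Q'" by (rule hcount_le_ph)
        ultimately have "pillar_height sa Q' = pillar_height sa Q" using eq by linarith
        moreover have "size Q' \<le> size Q" using size_le step.prems(2) by blast
        ultimately show False using step.prems(1) step.hyps(1) unfolding l_eligible_def by (metis le_trans)
      qed
    qed
  qed
  then show ?case using step.IH step.prems(1) by blast
qed

theorem lemma4: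
  fixes l :: nat and sa :: "'a \<Rightarrow> 'b" and Q Qdot Q' :: "'a multiset" and v :: 'b
  assumes "l \<ge> 1"
    and "peel l sa Q Qdot"
    and "Q' \<subseteq># Q"
    and "l_eligible l sa Q'"
  shows "hcount sa Q' v \<le> hcount sa Qdot v"
proof -
  have "\<forall>w. hcount sa Q' w \<le> hcount sa Q w"
    using assms(3) by (simp add: hcount_img image_mset_subseteq_mono mset_subset_eq_count)
  then show ?thesis using main[OF assms(2) assms(4)] by blast
qed

end
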